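(* Let $k,d\in\mathbb N$, let $\Gamma=(Z_{ij})_{d\times k}$ be a $d\times k$ categorical random matrix with rows $\mathbf Z_1^\top,\dots,\mathbf Z_d^\top$, and let $\mathbf U=(U_1,\dots,U_k)^\top$ have iid standard uniform components, independent of $\Gamma$. Define $\mathbf X=\Gamma\mathbf U=(\mathbf Z_1^\top\mathbf U,\dots,\mathbf Z_d^\top\mathbf U)$. Then: (i) each component of $\mathbf X$ is standard uniform; (ii) $\mathbf X$ has an invariant correlation matrix; (iii) the correlation matrix of $\mathbf X$ is $\mathbb E[\Gamma\Gamma^\top]$, and it equals the tail-dependence matrix of $\mathbf X$.
   Context: A $d\times k$ categorical random matrix is a random matrix with entries in $\{0,1\}$ such that each row sums to $1$. A random vector $\mathbf X$ (components non-degenerate with finite variance) has an invariant correlation matrix $R=(r_{ij})$ if $\mathrm{Corr}(X_i,X_j)=\mathrm{Corr}(g(X_i),g(X_j))=r_{ij}$ for all $i,j$ and every measurable $g$ such that all $g(X_i)$ are non-degenerate with finite variance. For continuous $X_i,X_j$ with distribution functions $F_i,F_j$, the (lower) tail-dependence coefficient is $\lim_{u\downarrow0}\mathbb P(F_i(X_i)\le u,F_j(X_j)\le u)/u$; the tail-dependence matrix has this coefficient as its $(i,j)$ entry. *)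

theory Defs
  imports "HOL-Probability.Probability"
begin

definition std_uniform :: "'a measure \<Rightarrow> ('a \<Rightarrow> real) \<Rightarrow> bool" where
  "std_uniform M Y \<longleftrightarrow> Y \<in> borel_measurable M \<and>
     distr M borel Y = uniform_measure lborel {0..1::real}"

definition indep_rv :: "'a measure \<Rightarrow> 'b measure \<Rightarrow> ('a \<Rightarrow> 'b) \<Rightarrow> 'c measure \<Rightarrow> ('a \<Rightarrow> 'c) \<Rightarrow> bool" where
  "indep_rv M Ma A Mb B \<longleftrightarrow> A \<in> measurable M Ma \<and> B \<in> measurable M Mb \<and>
     (\<forall>SA\<in>sets Ma. \<forall>SB\<in>sets Mb.
        measure M (A -` SA \<inter> B -` SB \<inter> space M)
          = measure M (A -` SA \<inter> space M) * measure M (B -` SB \<inter> space M))"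

definition categorical_matrix :: "'a measure \<Rightarrow> nat \<Rightarrow> nat \<Rightarrow> (nat \<Rightarrow> nat \<Rightarrow> 'a \<Rightarrow> real) \<Rightarrow> bool" where
  "categorical_matrix M d k Z \<longleftrightarrow>
     (\<forall>i<d. \<forall>j<k. Z i j \<in> borel_measurable M) \<and>
     (\<forall>\<omega>\<in>space M. \<forall>i<d. (\<forall>j<k. Z i j \<omega> \<in> {0,1}) \<and> (\<Sum>j<k. Z i j \<omega>) = 1)"

definition finite_var :: "'a measure \<Rightarrow> ('a \<Rightarrow> real) \<Rightarrow> bool" where
  "finite_var M Y \<longleftrightarrow> Y \<in> borel_measurable M \<and> integrable M (\<lambda>\<omega>. (Y \<omega>)\<^sup>2)"

definition nondegenerate :: "'a measure \<Rightarrow> ('a \<Rightarrow> real) \<Rightarrow> bool" where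
  "nondegenerate M Y \<longleftrightarrow> \<not> (\<exists>c. AE \<omega> in M. Y \<omega> = c)"

definition covar :: "'a measure \<Rightarrow> ('a \<Rightarrow> real) \<Rightarrow> ('a \<Rightarrow> real) \<Rightarrow> real" where
  "covar M Y W = (\<integral>\<omega>. (Y \<omega> - (\<integral>x. Y x \<partial>M)) * (W \<omega> - (\<integral>x. W x \<partial>M)) \<partial>M)"

definition corr :: "'a measure \<Rightarrow> ('a \<Rightarrow> real) \<Rightarrow> ('a \<Rightarrow> real) \<Rightarrow> real" where
  "corr M Y W = covar M Y W / sqrt (covar M Y Y * covar M W W)"

definition has_invariant_corr :: "'a measure \<Rightarrow> nat \<Rightarrow> (nat \<Rightarrow> 'a \<Rightarrow> real) \<Rightarrow> (nat \<Rightarrow> nat \<Rightarrow> real) \<Rightarrow> bool" where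
  "has_invariant_corr M d X R \<longleftrightarrow>
     (\<forall>i<d. finite_var M (X i) \<and> nondegenerate M (X i)) \<and>
     (\<forall>i<d. \<forall>j<d. corr M (X i) (X j) = R i j) \<and>
     (\<forall>g \<in> borel_measurable (borel :: real measure).
        (\<forall>i<d. finite_var M (\<lambda>\<omega>. g (X i \<omega>)) \<and> nondegenerate M (\<lambda>\<omega>. g (X i \<omega>))) \<longrightarrow>
        (\<forall>i<d. \<forall>j<d. corr M (\<lambda>\<omega>. g (X i \<omega>)) (\<lambda>\<omega>. g (X j \<omega>)) = R i j))"

definition has_tail_dep :: "'a measure \<Rightarrow> ('a \<Rightarrow> real) \<Rightarrow> ('a \<Rightarrow> real) \<Rightarrow> real \<Rightarrow> bool" where
  "has_tail_dep M Xi Xj l \<longleftrightarrow>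
     ((\<lambda>u. measure M {\<omega>\<in>space M. cdf (distr M borel Xi) (Xi \<omega>) \<le> u \<and>
                                   cdf (distr M borel Xj) (Xj \<omega>) \<le> u} / u)
       \<longlongrightarrow> l) (at_right 0)"

end

theory Submission
  imports Defs
begin


abbreviation uni :: "real measure" where "uni \<equiv> uniform_measure lborel {0..1::real}"

lemma uni_prob: "prob_space uni"
  by (rule prob_space_uniform_measure) auto

lemma abs_mult_le_sq: "\<bar>x * y\<bar> \<le> x\<^sup>2 + y\<^sup>2" for x y :: real
proof -
  have "0 \<le> (\<bar>x\<bar> - \<bar>y\<bar>)\<^sup>2" by simp
  also have "\<dots> = x\<^sup>2 - 2 * (\<bar>x\<bar> * \<bar>y\<bar>) + y\<^sup>2"
    by (simp add: power2_diff)
  finally have "2 * (\<bar>x\<bar> * \<bar>y\<bar>) \<le> x\<^sup>2 + y\<^sup>2" by simp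
  moreover have "0 \<le> \<bar>x\<bar> * \<bar>y\<bar>" by simp
  ultimately show ?thesis unfolding abs_mult by linarith
qed

lemma double_sum_split:
  fixes e :: "nat \<Rightarrow> nat \<Rightarrow> real"
  shows "(\<Sum>l<k. \<Sum>m<k. e l m * (if l = m then b else c)) = c * (\<Sum>l<k. \<Sum>m<k. e l m) + (b - c) * (\<Sum>l<k. e l l)"
proof -
  have "\<And>l m. e l m * (if l = m then b else c) = c * e l m + (if m = l then (b - c) * e l l else 0)" by (auto simp: algebra_simps)
  then have "(\<Sum>l<k. \<Sum>m<k. e l m * (if l = m then b else c)) = (\<Sum>l<k. \<Sum>m<k. c * e l m + (if m = l then (b - c) * e l l else 0))"
    by presburger
  also have "\<dots> = (\<Sum>l<k. c * (\<Sum>m<k. e l m) + (b - c) * e l l)"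
  proof (rule sum.cong[OF refl])
    fix l assume "l \<in> {..<k}"
    then have "(\<Sum>m<k. (if m = l then (b - c) * e l l else 0)) = (b - c) * e l l" by simp
    then show "(\<Sum>m<k. c * e l m + (if m = l then (b - c) * e l l else 0)) = c * (\<Sum>m<k. e l m) + (b - c) * e l l"
      by (simp add: sum.distrib sum_distrib_left)
  qed
  also have "\<dots> = c * (\<Sum>l<k. \<Sum>m<k. e l m) + (b - c) * (\<Sum>l<k. e l l)"
    by (simp add: sum.distrib sum_distrib_left)
  finally show ?thesis .
qed

locale catU = prob_space M for M :: "'a measure" +
  fixes d k :: nat and Z :: "nat \<Rightarrow> nat \<Rightarrow> 'a \<Rightarrow> real" and U X :: "nat \<Rightarrow> 'a \<Rightarrow> real"
  assumes cat: "categorical_matrix M d k Z"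
  and unif: "\<And>j. j < k \<Longrightarrow> std_uniform M (U j)"
  and indepU: "indep_vars (\<lambda>_. borel) U {..<k}"
  and indepZU: "indep_rv M
           (PiM ({..<d} \<times> {..<k}) (\<lambda>_. borel)) (\<lambda>\<omega>. \<lambda>(i,j)\<in>{..<d} \<times> {..<k}. Z i j \<omega>)
           (PiM {..<k} (\<lambda>_. borel)) (\<lambda>\<omega>. \<lambda>j\<in>{..<k}. U j \<omega>)"
  and Xdef: "\<And>i \<omega>. X i \<omega> = (\<Sum>j<k. Z i j \<omega> * U j \<omega>)"
begin

lemma Z_meas[measurable]: "i < d \<Longrightarrow> l < k \<Longrightarrow> Z i l \<in> borel_measurable M"
  using cat unfolding categorical_matrix_def by auto

lemma Z01: "\<omega> \<in> space M \<Longrightarrow> i < d \<Longrightarrow> l < k \<Longrightarrow> Z i l \<omega> = 0 \<or> Z i l \<omega> = 1"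
  using cat unfolding categorical_matrix_def by auto

lemma Zsum: "\<omega> \<in> space M \<Longrightarrow> i < d \<Longrightarrow> (\<Sum>l<k. Z i l \<omega>) = 1"
  using cat unfolding categorical_matrix_def by auto

lemma U_meas[measurable]: "l < k \<Longrightarrow> U l \<in> borel_measurable M"
  using unif unfolding std_uniform_def by auto

lemma U_distr: "l < k \<Longrightarrow> distr M borel (U l) = uni"
  using unif unfolding std_uniform_def by auto

lemma onehot:
  assumes "\<omega> \<in> space M" "i < d"
  shows "\<exists>l0<k. Z i l0 \<omega> = 1 \<and> (\<forall>l<k. l \<noteq> l0 \<longrightarrow> Z i l \<omega> = 0)"
proof -
  have nn: "\<And>l. l < k \<Longrightarrow> Z i l \<omega> \<ge> 0" using Z01[OF assms] by force
  obtain l0 where l0: "l0 < k" "Z i l0 \<omega> = 1"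
  proof (rule ccontr)
    assume "\<not> thesis"
    with that have "\<And>l. l < k \<Longrightarrow> Z i l \<omega> = 0" using Z01[OF assms] by blast
    then have "(\<Sum>l<k. Z i l \<omega>) = 0" by simp
    with Zsum[OF assms] show False by simp
  qed
  moreover have "\<forall>l<k. l \<noteq> l0 \<longrightarrow> Z i l \<omega> = 0"
  proof (intro allI impI, rule ccontr)
    fix l assume l: "l < k" "l \<noteq> l0" "Z i l \<omega> \<noteq> 0"
    then have "Z i l \<omega> = 1" using Z01[OF assms] by blast
    have "(\<Sum>l\<in>{l,l0}. Z i l \<omega>) \<le> (\<Sum>l<k. Z i l \<omega>)"
      by (rule sum_mono2) (use l l0 nn in auto)
    then show False using l l0 \<open>Z i l \<omega> = 1\<close> Zsum[OF assms] by simp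
  qed
  ultimately show ?thesis by blast
qed

lemma sum_onehot:
  assumes "\<omega> \<in> space M" "i < d"
  shows "h (X i \<omega>) = (\<Sum>l<k. Z i l \<omega> * h (U l \<omega>))"
proof -
  obtain l0 where l0: "l0 < k" "Z i l0 \<omega> = 1" "\<And>l. l < k \<Longrightarrow> l \<noteq> l0 \<Longrightarrow> Z i l \<omega> = 0"
    using onehot[OF assms] by blast
  have e: "(\<Sum>l<k. Z i l \<omega> * f l) = f l0" for f :: "nat \<Rightarrow> real"
  proof -
    have "(\<Sum>l<k. Z i l \<omega> * f l) = Z i l0 \<omega> * f l0 + (\<Sum>l\<in>{..<k} - {l0}. Z i l \<omega> * f l)"
      by (rule sum.remove) (use l0 in auto)
    also have "(\<Sum>l\<in>{..<k} - {l0}. Z i l \<omega> * f l) = 0"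
      by (rule sum.neutral) (use l0 in auto)
    finally show ?thesis using l0 by simp
  qed
  show ?thesis using e[of "\<lambda>l. U l \<omega>"] e[of "\<lambda>l. h (U l \<omega>)"] Xdef[of i \<omega>] by simp
qed

lemma X_meas[measurable]: "i < d \<Longrightarrow> X i \<in> borel_measurable M"
proof -
  assume "i < d"
  have "X i = (\<lambda>\<omega>. \<Sum>j<k. Z i j \<omega> * U j \<omega>)" using Xdef by blast
  then show ?thesis using \<open>i < d\<close> by simp
qed


abbreviation "DK \<equiv> {..<d} \<times> {..<k}"
abbreviation "MZ \<equiv> PiM DK (\<lambda>_. borel :: real measure)"
abbreviation "MU \<equiv> PiM {..<k} (\<lambda>_. borel :: real measure)"
abbreviation "Zv \<equiv> (\<lambda>\<omega>. \<lambda>(i,j)\<in>DK. Z i j \<omega>)"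
abbreviation "Uv \<equiv> (\<lambda>\<omega>. \<lambda>j\<in>{..<k}. U j \<omega>)"

lemma preimage_sigma:
  fixes V :: "'a \<Rightarrow> 'b" and N :: "'b measure"
  assumes mV: "V \<in> measurable M N" and F: "F \<in> borel_measurable N"
  shows "sigma_sets (space M) {(\<lambda>\<omega>. (F (V \<omega>)::real)) -` A \<inter> space M | A. A \<in> sets borel}
      \<subseteq> {V -` A \<inter> space M | A. A \<in> sets N}"
proof -
  have piV: "V \<in> space M \<rightarrow> space N" using measurable_space[OF mV] by (intro Pi_I)
  have sV: "sigma_sets (space M) {V -` A \<inter> space M | A. A \<in> sets N} = {V -` A \<inter> space M | A. A \<in> sets N}"
    using sets_vimage_algebra[of "space M" V N] sets_vimage_algebra2[OF piV] by simp
  have "{(\<lambda>\<omega>. F (V \<omega>)) -` A \<inter> space M | A. A \<in> sets borel} \<subseteq> {V -` A \<inter> space M | A. A \<in> sets N}"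
  proof
    fix x assume "x \<in> {(\<lambda>\<omega>. F (V \<omega>)) -` A \<inter> space M | A. A \<in> sets borel}"
    then obtain A where A: "A \<in> sets borel" "x = (\<lambda>\<omega>. F (V \<omega>)) -` A \<inter> space M" by blast
    have "x = V -` (F -` A \<inter> space N) \<inter> space M"
      using A(2) measurable_space[OF mV] by blast
    moreover have "F -` A \<inter> space N \<in> sets N" by (rule measurable_sets[OF F A(1)])
    ultimately show "x \<in> {V -` A \<inter> space M | A. A \<in> sets N}" by blast
  qed
  then have "sigma_sets (space M) {(\<lambda>\<omega>. F (V \<omega>)) -` A \<inter> space M | A. A \<in> sets borel}
      \<subseteq> sigma_sets (space M) {V -` A \<inter> space M | A. A \<in> sets N}"
    by (rule sigma_sets_mono')
  then show ?thesis unfolding sV .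
qed

lemma indep_FG:
  fixes F :: "(nat \<times> nat \<Rightarrow> real) \<Rightarrow> real" and G :: "(nat \<Rightarrow> real) \<Rightarrow> real"
  assumes F: "F \<in> borel_measurable MZ" and G: "G \<in> borel_measurable MU"
  shows "indep_var borel (\<lambda>\<omega>. F (Zv \<omega>)) borel (\<lambda>\<omega>. G (Uv \<omega>))"
proof -
  have mZ: "Zv \<in> measurable M MZ" and mU: "Uv \<in> measurable M MU"
    using indepZU unfolding indep_rv_def by auto
  note subZ = preimage_sigma[OF mZ F]
  note subU = preimage_sigma[OF mU G]
  have eZ: "{Zv -` A \<inter> space M | A. A \<in> sets MZ} \<subseteq> events" using measurable_sets[OF mZ] by blast
  have eU: "{Uv -` A \<inter> space M | A. A \<in> sets MU} \<subseteq> events" using measurable_sets[OF mU] by blast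
  show ?thesis unfolding indep_var_eq
  proof (intro conjI)
    show "random_variable borel (\<lambda>\<omega>. F (Zv \<omega>))" using measurable_comp[OF mZ F] by (simp add: comp_def)
    show "random_variable borel (\<lambda>\<omega>. G (Uv \<omega>))" using measurable_comp[OF mU G] by (simp add: comp_def)
    show "indep_set (sigma_sets (space M) {(\<lambda>\<omega>. F (Zv \<omega>)) -` A \<inter> space M | A. A \<in> sets borel})
       (sigma_sets (space M) {(\<lambda>\<omega>. G (Uv \<omega>)) -` A \<inter> space M | A. A \<in> sets borel})"
    proof (rule indep_setI)
      show "sigma_sets (space M) {(\<lambda>\<omega>. F (Zv \<omega>)) -` A \<inter> space M | A. A \<in> sets borel} \<subseteq> events"
        using subZ eZ by (rule subset_trans)
      show "sigma_sets (space M) {(\<lambda>\<omega>. G (Uv \<omega>)) -` A \<inter> space M | A. A \<in> sets borel} \<subseteq> events"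
        using subU eU by (rule subset_trans)
      fix a b assume a: "a \<in> sigma_sets (space M) {(\<lambda>\<omega>. F (Zv \<omega>)) -` A \<inter> space M | A. A \<in> sets borel}"
        and b: "b \<in> sigma_sets (space M) {(\<lambda>\<omega>. G (Uv \<omega>)) -` A \<inter> space M | A. A \<in> sets borel}"
      obtain SA where SA: "SA \<in> sets MZ" "a = Zv -` SA \<inter> space M" using a subZ by blast
      obtain SB where SB: "SB \<in> sets MU" "b = Uv -` SB \<inter> space M" using b subU by blast
      have ab: "a \<inter> b = Zv -` SA \<inter> Uv -` SB \<inter> space M" using SA(2) SB(2) by blast
      have "prob (a \<inter> b) = measure M (Zv -` SA \<inter> Uv -` SB \<inter> space M)" by (simp only: ab)
      also have "\<dots> = measure M (Zv -` SA \<inter> space M) * measure M (Uv -` SB \<inter> space M)"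
        using indepZU SA(1) SB(1) unfolding indep_rv_def by blast
      also have "\<dots> = prob a * prob b" by (simp only: SA(2) SB(2))
      finally show "prob (a \<inter> b) = prob a * prob b" .
    qed
  qed
qed

lemma indep_prod:
  fixes F :: "(nat \<times> nat \<Rightarrow> real) \<Rightarrow> real" and G :: "(nat \<Rightarrow> real) \<Rightarrow> real"
  assumes F: "F \<in> borel_measurable MZ" and G: "G \<in> borel_measurable MU"
    and iF: "integrable M (\<lambda>\<omega>. F (Zv \<omega>))" and iG: "integrable M (\<lambda>\<omega>. G (Uv \<omega>))"
  shows "integrable M (\<lambda>\<omega>. F (Zv \<omega>) * G (Uv \<omega>))"
    "(\<integral>\<omega>. F (Zv \<omega>) * G (Uv \<omega>) \<partial>M) = (\<integral>\<omega>. F (Zv \<omega>) \<partial>M) * (\<integral>\<omega>. G (Uv \<omega>) \<partial>M)"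
  using indep_var_integrable[OF indep_FG[OF F G] iF iG]
    indep_var_lebesgue_integral[OF indep_FG[OF F G] iF iG] by auto

lemma hU_int:
  fixes h :: "real \<Rightarrow> real"
  assumes "l < k" "h \<in> borel_measurable borel" "integrable uni h"
  shows "integrable M (\<lambda>\<omega>. h (U l \<omega>))"
  using integrable_distr_eq[of "U l" M borel h] assms U_distr[OF assms(1)] by simp

lemma hU_integral:
  fixes h :: "real \<Rightarrow> real"
  assumes "l < k" "h \<in> borel_measurable borel"
  shows "(\<integral>\<omega>. h (U l \<omega>) \<partial>M) = (\<integral>x. h x \<partial>uni)"
  using integral_distr[of "U l" M borel h] assms U_distr[OF assms(1)] by simp

lemma sq_bound_int:
  fixes f g p :: "'a \<Rightarrow> real"
  assumes "integrable M f" "integrable M g" "p \<in> borel_measurable M"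
    and "AE \<omega> in M. \<bar>p \<omega>\<bar> \<le> \<bar>f \<omega>\<bar> + \<bar>g \<omega>\<bar>"
  shows "integrable M p"
proof (rule Bochner_Integration.integrable_bound[where f="\<lambda>\<omega>. \<bar>f \<omega>\<bar> + \<bar>g \<omega>\<bar>"])
  show "integrable M (\<lambda>\<omega>. \<bar>f \<omega>\<bar> + \<bar>g \<omega>\<bar>)" using assms by auto
  show "p \<in> borel_measurable M" by fact
  show "AE x in M. norm (p x) \<le> norm (\<bar>f x\<bar> + \<bar>g x\<bar>)" using assms(4) by auto
qed

lemma UU:
  fixes h :: "real \<Rightarrow> real"
  assumes l: "l < k" and m: "m < k" and h[measurable]: "h \<in> borel_measurable borel"
    and i1: "integrable uni h" and i2: "integrable uni (\<lambda>x. (h x)\<^sup>2)"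
  shows "integrable M (\<lambda>\<omega>. h (U l \<omega>) * h (U m \<omega>))"
    "(\<integral>\<omega>. h (U l \<omega>) * h (U m \<omega>) \<partial>M) =
       (if l = m then (\<integral>x. (h x)\<^sup>2 \<partial>uni) else (\<integral>x. h x \<partial>uni)\<^sup>2)"
proof -
  have h2: "(\<lambda>x. (h x)\<^sup>2) \<in> borel_measurable borel" by measurable
  have s1: "integrable M (\<lambda>\<omega>. (h (U l \<omega>))\<^sup>2)" using hU_int[OF l h2 i2] by simp
  have s2: "integrable M (\<lambda>\<omega>. (h (U m \<omega>))\<^sup>2)" using hU_int[OF m h2 i2] by simp
  show "integrable M (\<lambda>\<omega>. h (U l \<omega>) * h (U m \<omega>))"
  proof (rule sq_bound_int[OF s1 s2])
    have [measurable]: "U l \<in> borel_measurable M" "U m \<in> borel_measurable M" using l m by auto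
    show "(\<lambda>\<omega>. h (U l \<omega>) * h (U m \<omega>)) \<in> borel_measurable M" by measurable
    show "AE \<omega> in M. \<bar>h (U l \<omega>) * h (U m \<omega>)\<bar> \<le> \<bar>(h (U l \<omega>))\<^sup>2\<bar> + \<bar>(h (U m \<omega>))\<^sup>2\<bar>"
    proof (rule AE_I2)
      fix \<omega> show "\<bar>h (U l \<omega>) * h (U m \<omega>)\<bar> \<le> \<bar>(h (U l \<omega>))\<^sup>2\<bar> + \<bar>(h (U m \<omega>))\<^sup>2\<bar>"
        using abs_mult_le_sq[of "h (U l \<omega>)" "h (U m \<omega>)"] by (simp only: abs_power2)
    qed
  qed
  show "(\<integral>\<omega>. h (U l \<omega>) * h (U m \<omega>) \<partial>M) =
       (if l = m then (\<integral>x. (h x)\<^sup>2 \<partial>uni) else (\<integral>x. h x \<partial>uni)\<^sup>2)"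
  proof (cases "l = m")
    case True
    then show ?thesis using hU_integral[OF l h2] by (simp add: power2_eq_square)
  next
    case False
    have ind: "indep_vars (\<lambda>_. borel) (\<lambda>i \<omega>. h (U i \<omega>)) {l, m}"
      by (rule indep_vars_compose2[where N="\<lambda>_. borel", OF indep_vars_subset[OF indepU]])
         (use l m in auto)
    have "(\<integral>\<omega>. (\<Prod>i\<in>{l,m}. h (U i \<omega>)) \<partial>M) = (\<Prod>i\<in>{l,m}. \<integral>\<omega>. h (U i \<omega>) \<partial>M)"
    proof (rule indep_vars_lebesgue_integral[OF _ ind])
      show "finite {l, m}" by simp
      fix i assume "i \<in> {l, m}"
      then have "i < k" using l m by blast
      then show "integrable M (\<lambda>\<omega>. h (U i \<omega>))" using hU_int[OF _ h i1] by blast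
    qed
    then show ?thesis using False hU_integral[OF l h] hU_integral[OF m h]
      by (simp add: power2_eq_square)
  qed
qed

lemma ZZ_int:
  assumes "i < d" "j < d" "l < k" "m < k"
  shows "integrable M (\<lambda>\<omega>. Z i l \<omega> * Z j m \<omega>)"
proof (rule Bochner_Integration.integrable_bound[where f="\<lambda>_. 1::real"])
  show "integrable M (\<lambda>_. 1::real)" by simp
  show "(\<lambda>\<omega>. Z i l \<omega> * Z j m \<omega>) \<in> borel_measurable M" using assms by simp
  show "AE x in M. norm (Z i l x * Z j m x) \<le> norm (1::real)"
  proof (rule AE_I2)
    fix x assume x: "x \<in> space M"
    show "norm (Z i l x * Z j m x) \<le> norm (1::real)"
      using Z01[OF x assms(1,3)] Z01[OF x assms(2,4)] by auto
  qed
qed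

lemma term_ind:
  fixes h :: "real \<Rightarrow> real"
  assumes i: "i < d" and j: "j < d" and l: "l < k" and m: "m < k"
    and h[measurable]: "h \<in> borel_measurable borel"
    and i1: "integrable uni h" and i2: "integrable uni (\<lambda>x. (h x)\<^sup>2)"
  shows "integrable M (\<lambda>\<omega>. (Z i l \<omega> * Z j m \<omega>) * (h (U l \<omega>) * h (U m \<omega>)))"
    "(\<integral>\<omega>. (Z i l \<omega> * Z j m \<omega>) * (h (U l \<omega>) * h (U m \<omega>)) \<partial>M) =
      (\<integral>\<omega>. Z i l \<omega> * Z j m \<omega> \<partial>M) *
       (if l = m then (\<integral>x. (h x)\<^sup>2 \<partial>uni) else (\<integral>x. h x \<partial>uni)\<^sup>2)"
proof -
  define F where "F = (\<lambda>z::nat\<times>nat\<Rightarrow>real. z (i,l) * z (j,m))"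
  define G where "G = (\<lambda>u::nat\<Rightarrow>real. h (u l) * h (u m))"
  have c1: "(\<lambda>z. z (i,l)) \<in> borel_measurable MZ"
    by (rule measurable_component_singleton) (use i l in auto)
  have c2: "(\<lambda>z. z (j,m)) \<in> borel_measurable MZ"
    by (rule measurable_component_singleton) (use j m in auto)
  have c3: "(\<lambda>u. u l) \<in> borel_measurable MU"
    by (rule measurable_component_singleton) (use l in auto)
  have c4: "(\<lambda>u. u m) \<in> borel_measurable MU"
    by (rule measurable_component_singleton) (use m in auto)
  have F: "F \<in> borel_measurable MZ" unfolding F_def using c1 c2 by measurable
  have G: "G \<in> borel_measurable MU" unfolding G_def using c3 c4 by measurable
  have eF: "\<And>\<omega>. F (Zv \<omega>) = Z i l \<omega> * Z j m \<omega>" unfolding F_def using i j l m by auto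
  have eG: "\<And>\<omega>. G (Uv \<omega>) = h (U l \<omega>) * h (U m \<omega>)" unfolding G_def using l m by auto
  have iF: "integrable M (\<lambda>\<omega>. F (Zv \<omega>))" unfolding eF by (rule ZZ_int[OF i j l m])
  have iG: "integrable M (\<lambda>\<omega>. G (Uv \<omega>))" unfolding eG by (rule UU(1)[OF l m h i1 i2])
  show "integrable M (\<lambda>\<omega>. (Z i l \<omega> * Z j m \<omega>) * (h (U l \<omega>) * h (U m \<omega>)))"
    using indep_prod(1)[OF F G iF iG] unfolding eF eG by simp
  show "(\<integral>\<omega>. (Z i l \<omega> * Z j m \<omega>) * (h (U l \<omega>) * h (U m \<omega>)) \<partial>M) =
      (\<integral>\<omega>. Z i l \<omega> * Z j m \<omega> \<partial>M) *
       (if l = m then (\<integral>x. (h x)\<^sup>2 \<partial>uni) else (\<integral>x. h x \<partial>uni)\<^sup>2)"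
    using indep_prod(2)[OF F G iF iG] UU(2)[OF l m h i1 i2] unfolding eF eG by simp
qed


lemma ZZ_total:
  assumes i: "i < d" and j: "j < d"
  shows "(\<Sum>l<k. \<Sum>m<k. \<integral>\<omega>. Z i l \<omega> * Z j m \<omega> \<partial>M) = 1"
proof -
  have "(\<Sum>l<k. \<Sum>m<k. \<integral>\<omega>. Z i l \<omega> * Z j m \<omega> \<partial>M) = (\<Sum>l<k. \<integral>\<omega>. (\<Sum>m<k. Z i l \<omega> * Z j m \<omega>) \<partial>M)"
  proof (rule sum.cong[OF refl])
    fix l assume "l \<in> {..<k}"
    then have l: "l < k" by simp
    have "(\<integral>\<omega>. (\<Sum>m<k. Z i l \<omega> * Z j m \<omega>) \<partial>M) = (\<Sum>m<k. \<integral>\<omega>. Z i l \<omega> * Z j m \<omega> \<partial>M)"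
      by (rule Bochner_Integration.integral_sum) (use i j l ZZ_int in auto)
    then show "(\<Sum>m<k. \<integral>\<omega>. Z i l \<omega> * Z j m \<omega> \<partial>M) = (\<integral>\<omega>. (\<Sum>m<k. Z i l \<omega> * Z j m \<omega>) \<partial>M)" by simp
  qed
  also have "\<dots> = (\<integral>\<omega>. (\<Sum>l<k. \<Sum>m<k. Z i l \<omega> * Z j m \<omega>) \<partial>M)"
    by (rule Bochner_Integration.integral_sum[symmetric], rule Bochner_Integration.integrable_sum) (use i j ZZ_int in auto)
  also have "\<dots> = (\<integral>\<omega>. 1 \<partial>M)"
  proof (rule Bochner_Integration.integral_cong[OF refl])
    fix \<omega> assume w: "\<omega> \<in> space M"
    have "(\<Sum>l<k. \<Sum>m<k. Z i l \<omega> * Z j m \<omega>) = (\<Sum>l<k. Z i l \<omega>) * (\<Sum>m<k. Z j m \<omega>)"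
      by (simp add: sum_product)
    then show "(\<Sum>l<k. \<Sum>m<k. Z i l \<omega> * Z j m \<omega>) = 1" using Zsum[OF w i] Zsum[OF w j] by simp
  qed
  also have "\<dots> = 1" using prob_space by simp
  finally show ?thesis .
qed

lemma core:
  fixes h :: "real \<Rightarrow> real"
  assumes i: "i < d" and j: "j < d"
    and h[measurable]: "h \<in> borel_measurable borel"
    and i1: "integrable uni h" and i2: "integrable uni (\<lambda>x. (h x)\<^sup>2)"
  shows "integrable M (\<lambda>\<omega>. h (X i \<omega>) * h (X j \<omega>))"
    "(\<integral>\<omega>. h (X i \<omega>) * h (X j \<omega>) \<partial>M) = (\<integral>x. h x \<partial>uni)\<^sup>2 +
        ((\<integral>x. (h x)\<^sup>2 \<partial>uni) - (\<integral>x. h x \<partial>uni)\<^sup>2) * (\<integral>\<omega>. (\<Sum>l<k. Z i l \<omega> * Z j l \<omega>) \<partial>M)"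
proof -
  define a where "a = (\<integral>x. h x \<partial>uni)"
  define b where "b = (\<integral>x. (h x)\<^sup>2 \<partial>uni)"
  define T where "T = (\<lambda>l m \<omega>. (Z i l \<omega> * Z j m \<omega>) * (h (U l \<omega>) * h (U m \<omega>)))"
  have pw: "h (X i \<omega>) * h (X j \<omega>) = (\<Sum>l<k. \<Sum>m<k. T l m \<omega>)" if w: "\<omega> \<in> space M" for \<omega>
    unfolding T_def sum_onehot[OF w i, of h] sum_onehot[OF w j, of h] sum_product
    by (intro sum.cong refl) (simp add: mult_ac)
  have Tint: "integrable M (T l m)" if "l < k" "m < k" for l m
    unfolding T_def by (rule term_ind(1)[OF i j that h i1 i2])
  have Tval: "integral\<^sup>L M (T l m) = (\<integral>\<omega>. Z i l \<omega> * Z j m \<omega> \<partial>M) * (if l = m then b else a\<^sup>2)"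
    if "l < k" "m < k" for l m
    unfolding T_def a_def b_def by (rule term_ind(2)[OF i j that h i1 i2])
  have sint: "integrable M (\<lambda>\<omega>. \<Sum>l<k. \<Sum>m<k. T l m \<omega>)"
    by (intro Bochner_Integration.integrable_sum) (use Tint in auto)
  show "integrable M (\<lambda>\<omega>. h (X i \<omega>) * h (X j \<omega>))"
    using sint by (rule Bochner_Integration.integrable_cong[THEN iffD2, OF refl pw, rotated])
  have "(\<integral>\<omega>. h (X i \<omega>) * h (X j \<omega>) \<partial>M) = (\<integral>\<omega>. (\<Sum>l<k. \<Sum>m<k. T l m \<omega>) \<partial>M)"
    by (rule Bochner_Integration.integral_cong[OF refl pw])
  also have "\<dots> = (\<Sum>l<k. \<integral>\<omega>. (\<Sum>m<k. T l m \<omega>) \<partial>M)"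
    by (rule Bochner_Integration.integral_sum, rule Bochner_Integration.integrable_sum) (use Tint in auto)
  also have "\<dots> = (\<Sum>l<k. \<Sum>m<k. integral\<^sup>L M (T l m))"
    by (rule sum.cong[OF refl], rule Bochner_Integration.integral_sum) (use Tint in auto)
  also have "\<dots> = (\<Sum>l<k. \<Sum>m<k. (\<integral>\<omega>. Z i l \<omega> * Z j m \<omega> \<partial>M) * (if l = m then b else a\<^sup>2))"
    by (intro sum.cong refl Tval) auto
  also have "\<dots> = a\<^sup>2 * (\<Sum>l<k. \<Sum>m<k. (\<integral>\<omega>. Z i l \<omega> * Z j m \<omega> \<partial>M)) + (b - a\<^sup>2) * (\<Sum>l<k. (\<integral>\<omega>. Z i l \<omega> * Z j l \<omega> \<partial>M))"
    by (rule double_sum_split)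
  also have "(\<Sum>l<k. (\<integral>\<omega>. Z i l \<omega> * Z j l \<omega> \<partial>M)) = (\<integral>\<omega>. (\<Sum>l<k. Z i l \<omega> * Z j l \<omega>) \<partial>M)"
    by (rule Bochner_Integration.integral_sum[symmetric]) (use i j ZZ_int in auto)
  finally show "(\<integral>\<omega>. h (X i \<omega>) * h (X j \<omega>) \<partial>M) = (\<integral>x. h x \<partial>uni)\<^sup>2 +
        ((\<integral>x. (h x)\<^sup>2 \<partial>uni) - (\<integral>x. h x \<partial>uni)\<^sup>2) * (\<integral>\<omega>. (\<Sum>l<k. Z i l \<omega> * Z j l \<omega>) \<partial>M)"
    unfolding ZZ_total[OF i j] a_def b_def by simp
qed

end


lemma cdf_uni: "cdf uni x = max 0 (min x 1)"
proof -
  have "cdf uni x = measure uni {..x}" by (simp add: cdf_def)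
  also have "\<dots> = measure lborel ({0..1} \<inter> {..x})" by simp
  also have "\<dots> = max 0 (min x 1)"
  proof (cases "x < 0")
    case True
    then have "{0..1} \<inter> {..x} = ({}::real set)" by auto
    then show ?thesis using True by simp
  next
    case False
    then have "{0..1} \<inter> {..x} = {0..min x 1}" by auto
    then show ?thesis using False by simp
  qed
  finally show ?thesis .
qed

lemma uni_fin: "finite_measure uni" using uni_prob by (simp add: prob_space_def)

lemma uni_int_ind: "A \<in> sets borel \<Longrightarrow> integrable uni (indicator A :: real \<Rightarrow> real)"
proof (rule integrable_real_indicator)
  assume "A \<in> sets borel" then show "A \<in> sets uni" by simp
  show "emeasure uni A < \<infinity>" using finite_measure.emeasure_finite[OF uni_fin, of A] by (simp only: infinity_ennreal_def less_top[symmetric]) simp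
qed

lemma uni_integral_ind: "(\<integral>x. indicator A x \<partial>uni) = measure uni A"
  by simp

context catU begin

lemma pp_diag: assumes i: "i < d" shows "(\<integral>\<omega>. (\<Sum>l<k. Z i l \<omega> * Z i l \<omega>) \<partial>M) = 1"
proof -
  have "(\<integral>\<omega>. (\<Sum>l<k. Z i l \<omega> * Z i l \<omega>) \<partial>M) = (\<integral>\<omega>. 1 \<partial>M)"
  proof (rule Bochner_Integration.integral_cong[OF refl])
    fix \<omega> assume w: "\<omega> \<in> space M"
    have "(\<Sum>l<k. Z i l \<omega> * Z i l \<omega>) = (\<Sum>l<k. Z i l \<omega>)"
      by (rule sum.cong[OF refl]) (use Z01[OF w i] in force)
    then show "(\<Sum>l<k. Z i l \<omega> * Z i l \<omega>) = 1" using Zsum[OF w i] by simp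
  qed
  then show ?thesis using prob_space by simp
qed

lemma X_distr: assumes i: "i < d" shows "distr M borel (X i) = uni"
proof (rule measure_eqI)
  show "sets (distr M borel (X i)) = sets uni" by simp
  fix A assume "A \<in> sets (distr M borel (X i))"
  then have A: "A \<in> sets borel" by simp
  have ind: "(indicator A :: real \<Rightarrow> real) \<in> borel_measurable borel" using A by simp
  have sq: "\<And>x. (indicator A x :: real)\<^sup>2 = indicator A x" by (simp add: indicator_def)
  have i2: "integrable uni (\<lambda>x. (indicator A x :: real)\<^sup>2)"
    unfolding sq using uni_int_ind[OF A] .
  have "measure M (X i -` A \<inter> space M) = (\<integral>\<omega>. indicator A (X i \<omega>) \<partial>M)"
  proof -
    have "(\<integral>\<omega>. indicator A (X i \<omega>) \<partial>M) = (\<integral>\<omega>. indicator (X i -` A) \<omega> \<partial>M)"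
      by (simp add: indicator_def)
    also have "\<dots> = measure M (X i -` A \<inter> space M)" by (rule Bochner_Integration.integral_indicator)
    finally show ?thesis by simp
  qed
  also have "\<dots> = (\<integral>\<omega>. indicator A (X i \<omega>) * indicator A (X i \<omega>) \<partial>M)"
    by (rule Bochner_Integration.integral_cong[OF refl]) (simp add: indicator_def)
  also have "\<dots> = measure uni A"
    using core(2)[OF i i ind uni_int_ind[OF A] i2] pp_diag[OF i] unfolding sq by simp
  finally have "measure M (X i -` A \<inter> space M) = measure uni A" .
  note mA = this
  have "emeasure (distr M borel (X i)) A = emeasure M (X i -` A \<inter> space M)"
    by (rule emeasure_distr[OF X_meas[OF i] A])
  also have "\<dots> = ennreal (measure M (X i -` A \<inter> space M))" by (rule emeasure_eq_measure)
  also have "\<dots> = ennreal (measure uni A)" by (simp only: mA)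
  also have "\<dots> = emeasure uni A" by (rule finite_measure.emeasure_eq_measure[OF uni_fin, symmetric])
  finally show "emeasure (distr M borel (X i)) A = emeasure uni A" .
qed

end


context catU begin

lemma corr_g:
  fixes g :: "real \<Rightarrow> real"
  assumes i: "i < d" and j: "j < d" and g[measurable]: "g \<in> borel_measurable borel"
    and fv: "finite_var M (\<lambda>\<omega>. g (X i \<omega>))" and nd: "nondegenerate M (\<lambda>\<omega>. g (X i \<omega>))"
  shows "corr M (\<lambda>\<omega>. g (X i \<omega>)) (\<lambda>\<omega>. g (X j \<omega>)) = (\<integral>\<omega>. (\<Sum>l<k. Z i l \<omega> * Z j l \<omega>) \<partial>M)"
proof -
  have g2: "integrable uni (\<lambda>x. (g x)\<^sup>2)"
    using fv integrable_distr_eq[of "X i" M borel "\<lambda>x. (g x)\<^sup>2"] X_meas[OF i] X_distr[OF i]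
    unfolding finite_var_def by simp
  have g1: "integrable uni g"
  proof (rule finite_measure.square_integrable_imp_integrable[OF uni_fin _ g2])
    have "borel_measurable uni = (borel_measurable borel :: (real \<Rightarrow> real) set)"
      by (rule measurable_cong_sets) simp_all
    then show "g \<in> borel_measurable uni" using g by simp
  qed
  define a where "a = (\<integral>x. g x \<partial>uni)"
  have mean: "(\<integral>\<omega>. g (X i' \<omega>) \<partial>M) = a" if "i' < d" for i'
    using integral_distr[of "X i'" M borel g] X_meas[OF that] X_distr[OF that] unfolding a_def by simp
  define h where "h = (\<lambda>x. g x - a)"
  have h[measurable]: "h \<in> borel_measurable borel" unfolding h_def by measurable
  have c1: "integrable uni (\<lambda>x. c)" for c :: real by (rule finite_measure.integrable_const[OF uni_fin])
  have h1: "integrable uni h" unfolding h_def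
    by (rule Bochner_Integration.integrable_diff[OF g1 c1])
  have hsq: "(\<lambda>x. (h x)\<^sup>2) = (\<lambda>x. (g x)\<^sup>2 - 2 * a * g x + a\<^sup>2)"
    unfolding h_def by (simp add: power2_diff algebra_simps)
  have h2: "integrable uni (\<lambda>x. (h x)\<^sup>2)" unfolding hsq
    by (intro Bochner_Integration.integrable_add Bochner_Integration.integrable_diff
          Bochner_Integration.integrable_mult_right g1 g2 c1)
  have h0: "(\<integral>x. h x \<partial>uni) = 0"
  proof -
    have "(\<integral>x. h x \<partial>uni) = (\<integral>x. g x \<partial>uni) - (\<integral>x. a \<partial>uni)"
      unfolding h_def by (rule Bochner_Integration.integral_diff[OF g1 c1])
    also have "(\<integral>x. a \<partial>uni) = a" using prob_space.prob_space[OF uni_prob] by simp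
    finally show ?thesis unfolding a_def by simp
  qed
  define v where "v = (\<integral>x. (h x)\<^sup>2 \<partial>uni)"
  have cov: "covar M (\<lambda>\<omega>. g (X i' \<omega>)) (\<lambda>\<omega>. g (X j' \<omega>)) = v * (\<integral>\<omega>. (\<Sum>l<k. Z i' l \<omega> * Z j' l \<omega>) \<partial>M)"
    if "i' < d" "j' < d" for i' j'
  proof -
    have "covar M (\<lambda>\<omega>. g (X i' \<omega>)) (\<lambda>\<omega>. g (X j' \<omega>)) = (\<integral>\<omega>. h (X i' \<omega>) * h (X j' \<omega>) \<partial>M)"
      unfolding covar_def mean[OF that(1)] mean[OF that(2)] h_def ..
    also have "\<dots> = v * (\<integral>\<omega>. (\<Sum>l<k. Z i' l \<omega> * Z j' l \<omega>) \<partial>M)"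
      using core(2)[OF that h h1 h2] h0 unfolding v_def by simp
    finally show ?thesis .
  qed
  have vii: "covar M (\<lambda>\<omega>. g (X i \<omega>)) (\<lambda>\<omega>. g (X i \<omega>)) = v" using cov[OF i i] pp_diag[OF i] by simp
  have vjj: "covar M (\<lambda>\<omega>. g (X j \<omega>)) (\<lambda>\<omega>. g (X j \<omega>)) = v" using cov[OF j j] pp_diag[OF j] by simp
  have vpos: "v > 0"
  proof -
    have "v \<ge> 0" unfolding v_def by simp
    moreover have "v \<noteq> 0"
    proof
      assume v0: "v = 0"
      have int: "integrable M (\<lambda>\<omega>. h (X i \<omega>) * h (X i \<omega>))" by (rule core(1)[OF i i h h1 h2])
      have "(\<integral>\<omega>. h (X i \<omega>) * h (X i \<omega>) \<partial>M) = 0"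
        using vii v0 unfolding covar_def mean[OF i] h_def by simp
      then have "AE \<omega> in M. h (X i \<omega>) * h (X i \<omega>) = 0"
        using integral_nonneg_eq_0_iff_AE[OF int] by simp
      then have "AE \<omega> in M. g (X i \<omega>) = a"
        by eventually_elim (simp add: h_def)
      then show False using nd unfolding nondegenerate_def by blast
    qed
    ultimately show ?thesis by simp
  qed
  have "corr M (\<lambda>\<omega>. g (X i \<omega>)) (\<lambda>\<omega>. g (X j \<omega>)) =
      v * (\<integral>\<omega>. (\<Sum>l<k. Z i l \<omega> * Z j l \<omega>) \<partial>M) / sqrt (v * v)"
    unfolding corr_def cov[OF i j] vii vjj ..
  also have "\<dots> = (\<integral>\<omega>. (\<Sum>l<k. Z i l \<omega> * Z j l \<omega>) \<partial>M)"
    using vpos by simp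
  finally show ?thesis .
qed

end


lemma uni_meas_eq: "borel_measurable uni = (borel_measurable borel :: (real \<Rightarrow> real) set)"
  by (rule measurable_cong_sets) simp_all

context catU begin

lemma X_fv: assumes i: "i < d" shows "finite_var M (X i)"
proof -
  have "integrable uni (\<lambda>x::real. x\<^sup>2)"
  proof (rule finite_measure.integrable_const_bound[OF uni_fin, where B=1])
    show "AE x in uni. norm (x\<^sup>2) \<le> (1::real)"
    proof (rule AE_uniform_measureI)
      show "{0..1::real} \<in> sets lborel" by simp
      show "AE x in lborel. x \<in> {0..1::real} \<longrightarrow> norm (x\<^sup>2) \<le> (1::real)"
        by (rule AE_I2) (auto simp: abs_le_iff power_le_one)
    qed
    show "(\<lambda>x::real. x\<^sup>2) \<in> borel_measurable uni" unfolding uni_meas_eq by measurable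
  qed
  then have "integrable M (\<lambda>\<omega>. (X i \<omega>)\<^sup>2)"
    using integrable_distr_eq[of "X i" M borel "\<lambda>x. x\<^sup>2"] X_meas[OF i] X_distr[OF i] by simp
  then show ?thesis unfolding finite_var_def using X_meas[OF i] by simp
qed

lemma X_nd: assumes i: "i < d" shows "nondegenerate M (X i)"
  unfolding nondegenerate_def
proof
  assume "\<exists>c. AE \<omega> in M. X i \<omega> = c"
  then obtain c where c: "AE \<omega> in M. X i \<omega> = c" by blast
  have mX[measurable]: "X i \<in> borel_measurable M" by (rule X_meas[OF i])
  have ev: "{\<omega> \<in> space M. X i \<omega> = c} \<in> events" by measurable
  have "prob {\<omega> \<in> space M. X i \<omega> = c} = 1" using prob_Collect_eq_1[OF ev] c by simp
  moreover have "{\<omega> \<in> space M. X i \<omega> = c} = X i -` {c} \<inter> space M" by auto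
  moreover have "measure M (X i -` {c} \<inter> space M) = measure (distr M borel (X i)) {c}"
    by (rule measure_distr[symmetric]) simp_all
  moreover have "measure (distr M borel (X i)) {c} = 0"
  proof -
    have "measure uni {c} = measure lborel ({0..1} \<inter> {c})" by simp
    also have "\<dots> = 0"
    proof (cases "c \<in> {0..1}")
      case True
      then have "{0..1} \<inter> {c} = {c}" by auto
      then show ?thesis by simp
    next
      case False
      then have "{0..1} \<inter> {c} = {}" by auto
      then show ?thesis by simp
    qed
    finally show ?thesis using X_distr[OF i] by simp
  qed
  ultimately show False by simp
qed

lemma tail:
  assumes i: "i < d" and j: "j < d"
  shows "has_tail_dep M (X i) (X j) (\<integral>\<omega>. (\<Sum>l<k. Z i l \<omega> * Z j l \<omega>) \<partial>M)"
proof -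
  define p where "p = (\<integral>\<omega>. (\<Sum>l<k. Z i l \<omega> * Z j l \<omega>) \<partial>M)"
  have mXi[measurable]: "X i \<in> borel_measurable M" by (rule X_meas[OF i])
  have mXj[measurable]: "X j \<in> borel_measurable M" by (rule X_meas[OF j])
  have key: "measure M {\<omega>\<in>space M. cdf (distr M borel (X i)) (X i \<omega>) \<le> u \<and>
                                   cdf (distr M borel (X j)) (X j \<omega>) \<le> u} / u = u + (1 - u) * p"
    if u: "0 < u" "u < 1" for u
  proof -
    have cu: "max 0 (min x 1) \<le> u \<longleftrightarrow> x \<le> u" for x :: real using u by (auto simp: max_def min_def)
    have S: "{\<omega>\<in>space M. cdf (distr M borel (X i)) (X i \<omega>) \<le> u \<and> cdf (distr M borel (X j)) (X j \<omega>) \<le> u}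
       = {\<omega>\<in>space M. X i \<omega> \<le> u \<and> X j \<omega> \<le> u}"
      unfolding X_distr[OF i] X_distr[OF j] cdf_uni cu ..
    have ind[measurable]: "(indicator {..u} :: real \<Rightarrow> real) \<in> borel_measurable borel" by simp
    have sq: "\<And>x. (indicator {..u} x :: real)\<^sup>2 = indicator {..u} x" by (simp add: indicator_def)
    have i1: "integrable uni (indicator {..u} :: real \<Rightarrow> real)" by (rule uni_int_ind) simp
    have i2: "integrable uni (\<lambda>x. (indicator {..u} x :: real)\<^sup>2)" unfolding sq by (rule i1)
    have a: "(\<integral>x. indicator {..u} x \<partial>uni) = u"
    proof -
      have "(\<integral>x. indicator {..u} x \<partial>uni) = measure uni {..u}" by (rule uni_integral_ind)
      also have "\<dots> = cdf uni u" by (simp add: cdf_def)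
      also have "\<dots> = u" using u by (simp add: cdf_uni)
      finally show ?thesis .
    qed
    have "measure M {\<omega>\<in>space M. X i \<omega> \<le> u \<and> X j \<omega> \<le> u}
        = (\<integral>\<omega>. indicator {\<omega>\<in>space M. X i \<omega> \<le> u \<and> X j \<omega> \<le> u} \<omega> \<partial>M)"
      by (simp add: Bochner_Integration.integral_indicator Int_absorb2)
    also have "\<dots> = (\<integral>\<omega>. indicator {..u} (X i \<omega>) * indicator {..u} (X j \<omega>) \<partial>M)"
      by (rule Bochner_Integration.integral_cong[OF refl]) (simp add: indicator_def)
    also have "\<dots> = u\<^sup>2 + (u - u\<^sup>2) * p"
      using core(2)[OF i j ind i1 i2] unfolding sq a p_def .
    finally have "measure M {\<omega>\<in>space M. X i \<omega> \<le> u \<and> X j \<omega> \<le> u} = u\<^sup>2 + (u - u\<^sup>2) * p" .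
    then show ?thesis unfolding S using u by (simp add: field_simps power2_eq_square)
  qed
  have ev: "eventually (\<lambda>u. measure M {\<omega>\<in>space M. cdf (distr M borel (X i)) (X i \<omega>) \<le> u \<and>
                                   cdf (distr M borel (X j)) (X j \<omega>) \<le> u} / u = u + (1 - u) * p) (at_right 0)"
    unfolding eventually_at_right_field using key by (intro exI[of _ 1]) auto
  have "((\<lambda>u. u + (1 - u) * p) \<longlongrightarrow> 0 + (1 - 0) * p) (at_right 0)"
    by (intro tendsto_intros)
  then have "((\<lambda>u. u + (1 - u) * p) \<longlongrightarrow> p) (at_right 0)" by simp
  then show ?thesis unfolding has_tail_dep_def p_def[symmetric] using tendsto_cong[OF ev] by simp
qed

end

theorem proposition8:
  fixes M :: "'a measure" and d k :: nat
    and Z :: "nat \<Rightarrow> nat \<Rightarrow> 'a \<Rightarrow> real" and U :: "nat \<Rightarrow> 'a \<Rightarrow> real"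
    and X :: "nat \<Rightarrow> 'a \<Rightarrow> real"
  assumes "prob_space M"
    and "categorical_matrix M d k Z"
    and "\<And>j. j < k \<Longrightarrow> std_uniform M (U j)"
    and "prob_space.indep_vars M (\<lambda>_. borel) U {..<k}"
    and "indep_rv M
           (PiM ({..<d} \<times> {..<k}) (\<lambda>_. borel)) (\<lambda>\<omega>. \<lambda>(i,j)\<in>{..<d} \<times> {..<k}. Z i j \<omega>)
           (PiM {..<k} (\<lambda>_. borel)) (\<lambda>\<omega>. \<lambda>j\<in>{..<k}. U j \<omega>)"
    and "\<And>i \<omega>. X i \<omega> = (\<Sum>j<k. Z i j \<omega> * U j \<omega>)"
  shows "(\<forall>i<d. std_uniform M (X i))
    \<and> (\<exists>R. has_invariant_corr M d X R)
    \<and> (\<forall>i<d. \<forall>j<d.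
          corr M (X i) (X j) = (\<integral>\<omega>. (\<Sum>l<k. Z i l \<omega> * Z j l \<omega>) \<partial>M)
        \<and> has_tail_dep M (X i) (X j) (\<integral>\<omega>. (\<Sum>l<k. Z i l \<omega> * Z j l \<omega>) \<partial>M))"
proof -
  interpret C: catU M d k Z U X
    by (rule catU.intro[OF assms(1) catU_axioms.intro[OF assms(2-6)]])
  define p where "p = (\<lambda>i j. (\<integral>\<omega>. (\<Sum>l<k. Z i l \<omega> * Z j l \<omega>) \<partial>M))"
  have cX: "corr M (X i) (X j) = p i j" if i: "i < d" and j: "j < d" for i j
  proof -
    have "corr M (\<lambda>\<omega>. X i \<omega>) (\<lambda>\<omega>. X j \<omega>) = p i j"
      using C.corr_g[OF i j, of "\<lambda>x. x"] C.X_fv[OF i] C.X_nd[OF i] unfolding p_def by simp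
    then show ?thesis by simp
  qed
  have part1: "\<forall>i<d. std_uniform M (X i)"
    using C.X_meas C.X_distr unfolding std_uniform_def by blast
  have part2: "has_invariant_corr M d X p"
    unfolding has_invariant_corr_def
  proof (intro conjI allI impI ballI)
    fix i assume "i < d"
    then show "finite_var M (X i)" "nondegenerate M (X i)" using C.X_fv C.X_nd by auto
  next
    fix i j assume "i < d" "j < d"
    then show "corr M (X i) (X j) = p i j" by (rule cX)
  next
    fix g :: "real \<Rightarrow> real" and i j
    assume g: "g \<in> borel_measurable borel"
      and h: "\<forall>i<d. finite_var M (\<lambda>\<omega>. g (X i \<omega>)) \<and> nondegenerate M (\<lambda>\<omega>. g (X i \<omega>))"
      and i: "i < d" and j: "j < d"
    show "corr M (\<lambda>\<omega>. g (X i \<omega>)) (\<lambda>\<omega>. g (X j \<omega>)) = p i j"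
      using C.corr_g[OF i j g] h i unfolding p_def by blast
  qed
  have part3: "\<forall>i<d. \<forall>j<d. corr M (X i) (X j) = p i j \<and> has_tail_dep M (X i) (X j) (p i j)"
    using cX C.tail unfolding p_def by blast
  show ?thesis using part1 part2 part3 unfolding p_def by blast
qed

end
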